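(* Under the standing assumptions and assumption (A), $\mathcal{E}(u,u)<\infty$ for all $u\in\mathrm{Lip}_c(\overline D)$.
   Context: Let $d\ge1$, $\alpha\in(0,2)$. $D\subset\mathbb{R}^d$ is a $\kappa$-fat open set (some $\kappa\in(0,1)$, localization constant $R_0\in(0,\mathrm{diam}(D)]$: for all $x\in\overline D$, $r\in(0,R_0)$ there is $z\in D$ with $B(z,\kappa r)\subset D\cap B(x,r)$) with Assouad dimension $\dim_{\rm A}(\partial D)<d$; $\gamma:=d-\dim_{\rm A}(\partial D)$; $\delta_D(x)=\mathrm{dist}(x,\partial D)$; $r\wedge\infty=r$. Assumption (A): $J$ is a symmetric Borel function on $D\times D$ and there exist a continuous increasing $\Phi:[0,\infty)\to[1,\infty)$ with $\Phi(0)=1$ and upper Matuszewska index $\overline\beta<\gamma\wedge\alpha$ (where $\overline\beta$ is the infimum of $\beta\ge0$ such that $\Phi(r)/\Phi(s)\le C(r/s)^\beta$ for all $0<s\le r$ with some $C$), and constants $A_0\in(0,\infty]$, $C_1>1$ such that for all $x,y\in D$, $C_1^{-1}\le J(x,y)|x-y|^{d+\alpha}\big/\Phi\big(\frac{(|x-y|\wedge A_0)^2}{(\delta_D(x)\wedge A_0)(\delta_D(y)\wedge A_0)}\big)\le C_1$. $\mathcal{E}(u,v)=\frac12\int_{D\times D}(u(x)-u(y))(v(x)-v(y))J(x,y)\,dx\,dy$. $\mathrm{Lip}_c(\overline D)$ is the set of Lipschitz functions on $\overline D$ with compact support. *)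

theory Defs
  imports "HOL-Analysis.Analysis" "HOL-Probability.Probability"
begin

definition assouad_dim :: "'a::euclidean_space set \<Rightarrow> ereal" where
  "assouad_dim F = Inf (ereal ` {s::real. s \<ge> 0 \<and> (\<exists>C::real. \<forall>x\<in>F. \<forall>r R. 0 < r \<and> r < R \<longrightarrow>
      (\<exists>S. finite S \<and> F \<inter> ball x R \<subseteq> (\<Union>c\<in>S. ball c r) \<and> real (card S) \<le> C * (R / r) powr s))})"

definition upper_matuszewska :: "(real \<Rightarrow> real) \<Rightarrow> ereal" where
  "upper_matuszewska \<Phi> = Inf (ereal ` {\<beta>::real. \<beta> \<ge> 0 \<and> (\<exists>C::real. \<forall>s r. 0 < s \<and> s \<le> r \<longrightarrow>
      \<Phi> r / \<Phi> s \<le> C * (r / s) powr \<beta>)})"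

definition kappa_fat :: "real \<Rightarrow> real \<Rightarrow> 'a::euclidean_space set \<Rightarrow> bool" where
  "kappa_fat \<kappa> R0 D \<longleftrightarrow> open D \<and> 0 < \<kappa> \<and> \<kappa> < 1 \<and> 0 < R0 \<and> (bounded D \<longrightarrow> R0 \<le> diameter D) \<and>
     (\<forall>x\<in>closure D. \<forall>r. 0 < r \<and> r < R0 \<longrightarrow> (\<exists>z\<in>D. ball z (\<kappa> * r) \<subseteq> D \<inter> ball x r))"

definition delta :: "'a::euclidean_space set \<Rightarrow> 'a \<Rightarrow> real" where
  "delta D x = infdist x (frontier D)"

definition capA :: "ereal \<Rightarrow> real \<Rightarrow> real" where
  "capA A0 r = real_of_ereal (min (ereal r) A0)"

definition energy :: "'a::euclidean_space set \<Rightarrow> ('a \<Rightarrow> 'a \<Rightarrow> real) \<Rightarrow> ('a \<Rightarrow> real) \<Rightarrow> ennreal" where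
  "energy D J u = ennreal (1/2) * (\<integral>\<^sup>+ p. indicator (D \<times> D) p *
      ennreal ((u (fst p) - u (snd p))^2 * J (fst p) (snd p)) \<partial>(lborel \<Otimes>\<^sub>M lborel))"

end

theory Submission
  imports Defs
begin


lemma infdist_lessE:
  assumes "infdist x A < e" "A \<noteq> {}"
  obtains a where "a \<in> A" "dist x a < e"
proof -
  have "(INF a\<in>A. dist x a) < e" using assms by (simp add: infdist_notempty)
  then have "\<exists>a\<in>A. dist x a < e"
    by (subst (asm) cINF_less_iff) (use assms in \<open>auto intro: bdd_belowI2[of _ 0]\<close>)
  then show ?thesis using that by blast
qed

lemma delta_meas[measurable]: "delta D \<in> borel_measurable borel"
  unfolding delta_def
  by (intro borel_measurable_continuous_onI continuous_intros)


lemma ball_borel[measurable]: "ball (z::'a::euclidean_space) R \<in> sets borel" by simp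

lemma delta_powr_meas[measurable]: "(\<lambda>x. ennreal (delta D x powr a)) \<in> borel_measurable lborel"
  by measurable

lemma delta_powr_meas'[measurable]: "(\<lambda>x. delta D x powr a) \<in> borel_measurable lborel"
  by measurable

lemma exists_dyadic:
  fixes v :: real assumes "1 \<le> v"
  shows "\<exists>k::nat. 2^k \<le> v \<and> v < 2^Suc k"
proof -
  obtain n where "v < 2^n" using real_arch_pow[of 2 v] by auto
  then have "\<exists>n. \<not> (v < 2^n) \<and> v < 2^Suc n"
    by (intro exists_least_lemma) (use assms in auto)
  then show ?thesis by (auto simp: not_less)
qed

lemma ennreal_le_suminf: "(f::nat \<Rightarrow> ennreal) k \<le> suminf f"
  using sum_le_suminf[of f "{k}"] by (auto simp: summableI)

lemma shell_bound:
  fixes f :: "'b \<Rightarrow> ennreal" and \<phi> :: "'b \<Rightarrow> real"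
  assumes meas: "\<And>k. (\<lambda>y. indicator {y. (2::real)^k \<le> \<phi> y \<and> \<phi> y < 2^Suc k} y * f y) \<in> borel_measurable M"
  shows "(\<integral>\<^sup>+y. indicator {y. 1 \<le> \<phi> y} y * f y \<partial>M)
     \<le> (\<Sum>k. \<integral>\<^sup>+y. indicator {y. (2::real)^k \<le> \<phi> y \<and> \<phi> y < 2^Suc k} y * f y \<partial>M)"
proof -
  have "(\<integral>\<^sup>+y. indicator {y. 1 \<le> \<phi> y} y * f y \<partial>M)
     \<le> (\<integral>\<^sup>+y. (\<Sum>k. indicator {y. (2::real)^k \<le> \<phi> y \<and> \<phi> y < 2^Suc k} y * f y) \<partial>M)"
  proof (rule nn_integral_mono)
    fix y
    show "indicator {y. 1 \<le> \<phi> y} y * f y \<le> (\<Sum>k. indicator {y. (2::real)^k \<le> \<phi> y \<and> \<phi> y < 2^Suc k} y * f y)"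
    proof (cases "1 \<le> \<phi> y")
      case True
      then obtain k::nat where k: "2^k \<le> \<phi> y \<and> \<phi> y < 2^Suc k" using exists_dyadic by blast
      have "indicator {y. 1 \<le> \<phi> y} y * f y = indicator {y. (2::real)^k \<le> \<phi> y \<and> \<phi> y < 2^Suc k} y * f y"
        using True k by (simp add: indicator_def)
      also have "\<dots> \<le> (\<Sum>k. indicator {y. (2::real)^k \<le> \<phi> y \<and> \<phi> y < 2^Suc k} y * f y)"
        by (rule ennreal_le_suminf)
      finally show ?thesis .
    qed simp
  qed
  also have "\<dots> = (\<Sum>k. \<integral>\<^sup>+y. indicator {y. (2::real)^k \<le> \<phi> y \<and> \<phi> y < 2^Suc k} y * f y \<partial>M)"
    by (rule nn_integral_suminf) (rule meas)
  finally show ?thesis .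
qed

lemma geom_ennreal:
  fixes c q :: real assumes "0 \<le> c" "0 \<le> q" "q < 1"
  shows "(\<Sum>k. ennreal (c * q^k)) = ennreal (c / (1 - q))"
proof -
  have "(\<lambda>k. c * q^k) sums (c * (1 / (1 - q)))"
    by (intro sums_mult geometric_sums) (use assms in auto)
  then show ?thesis
    by (subst suminf_ennreal_eq[where x="c * (1 / (1 - q))"]) (use assms in auto)
qed

lemma powr_shell:
  fixes r \<rho> a :: real assumes "0 < \<rho>" "\<rho>/2 \<le> r" "r \<le> 2*\<rho>"
  shows "r powr a \<le> 2 powr \<bar>a\<bar> * \<rho> powr a"
proof (cases "0 \<le> a")
  case True
  have "r powr a \<le> (2*\<rho>) powr a" 
    by (rule powr_mono2) (use assms True in linarith)+
  also have "\<dots> = 2 powr \<bar>a\<bar> * \<rho> powr a" using True assms by (simp add: powr_mult)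
  finally show ?thesis .
next
  case False
  have h1: "r powr a \<le> (\<rho>/2) powr a"
    by (rule powr_mono2') (use assms False in linarith)+
  have h2: "(\<rho>/2) powr a = \<rho> powr a / (2 powr a)" 
    using assms by (simp add: powr_divide)
  have "\<bar>a\<bar> = -a" using False by linarith
  then have h3: "(2::real) powr \<bar>a\<bar> = 1 / 2 powr a" by (simp add: powr_minus_divide)
  have "\<rho> powr a / (2 powr a) = 2 powr \<bar>a\<bar> * \<rho> powr a" unfolding h3 by simp
  then show ?thesis using h1 h2 by simp
qed

lemma pow2_powr': "((2::real)^k) powr a = (2 powr a)^k"
proof -
  have "((2::real)^k) powr a = (2 powr (real k)) powr a" by (simp add: powr_realpow)
  also have "\<dots> = 2 powr (a * real k)" by (simp add: powr_powr mult.commute)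
  also have "\<dots> = (2 powr a) powr (real k)" by (simp add: powr_powr)
  also have "\<dots> = (2 powr a)^k" by (simp add: powr_realpow)
  finally show ?thesis .
qed

lemma pow2_powr: "(inverse ((2::real)^k)) powr a = (2 powr (-a))^k"
proof -
  have "(inverse ((2::real)^k)) powr a = inverse (((2::real)^k) powr a)"
    by (rule inverse_powr)
  also have "\<dots> = inverse ((2 powr a)^k)" by (simp add: pow2_powr')
  also have "\<dots> = (2 powr (-a))^k" by (simp add: powr_minus power_inverse)
  finally show ?thesis .
qed

lemma near_shell_term:
  fixes g :: "'a::euclidean_space \<Rightarrow> ennreal" and x :: 'a
  assumes gm: "g \<in> borel_measurable lborel" and C: "0 \<le> C"
   and gb: "\<And>R. 0 < R \<Longrightarrow> (\<integral>\<^sup>+y. indicator (ball x R) y * g y \<partial>lborel) \<le> ennreal (C * R powr \<tau>)"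
  shows "(\<integral>\<^sup>+y. indicator {y. (2::real)^k \<le> 1 / dist x y \<and> 1 / dist x y < 2^Suc k} y *
            (ennreal (dist x y powr a) * g y) \<partial>lborel)
         \<le> ennreal (C * 2 powr (\<bar>a\<bar> + \<tau>) * (2 powr (-(a+\<tau>)))^k)"
proof -
  define \<rho> :: real where "\<rho> = inverse (2^k)"
  have \<rho>: "0 < \<rho>" by (simp add: \<rho>_def)
  have "(\<integral>\<^sup>+y. indicator {y. (2::real)^k \<le> 1 / dist x y \<and> 1 / dist x y < 2^Suc k} y *
            (ennreal (dist x y powr a) * g y) \<partial>lborel)
       \<le> (\<integral>\<^sup>+y. ennreal (2 powr \<bar>a\<bar> * \<rho> powr a) * (indicator (ball x (2*\<rho>)) y * g y) \<partial>lborel)"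
  proof (rule nn_integral_mono)
    fix y
    show "indicator {y. (2::real)^k \<le> 1 / dist x y \<and> 1 / dist x y < 2^Suc k} y *
            (ennreal (dist x y powr a) * g y)
       \<le> ennreal (2 powr \<bar>a\<bar> * \<rho> powr a) * (indicator (ball x (2*\<rho>)) y * g y)"
    proof (cases "(2::real)^k \<le> 1 / dist x y \<and> 1 / dist x y < 2^Suc k")
      case True
      then have dpos: "0 < dist x y"
        by (metis div_by_0 dist_not_less_zero linorder_not_le order_le_less zero_less_power zero_less_divide_1_iff zero_less_numeral)
      have le: "dist x y \<le> \<rho>" using True dpos unfolding \<rho>_def
        by (simp add: field_simps)
      have ge: "\<rho>/2 \<le> dist x y" using True dpos unfolding \<rho>_def
        by (simp add: field_simps)
      have "dist x y powr a \<le> 2 powr \<bar>a\<bar> * \<rho> powr a"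
        by (rule powr_shell) (use \<rho> le ge in auto)
      moreover have "y \<in> ball x (2*\<rho>)" using le \<rho> by (simp add: dist_commute)
      ultimately show ?thesis using True
        by (auto intro!: mult_right_mono ennreal_leI)
    qed simp
  qed
  also have "\<dots> = ennreal (2 powr \<bar>a\<bar> * \<rho> powr a) * (\<integral>\<^sup>+y. indicator (ball x (2*\<rho>)) y * g y \<partial>lborel)"
    by (rule nn_integral_cmult) (use gm in \<open>auto intro!: borel_measurable_times_ennreal borel_measurable_indicator\<close>)
  also have "\<dots> \<le> ennreal (2 powr \<bar>a\<bar> * \<rho> powr a) * ennreal (C * (2*\<rho>) powr \<tau>)"
    by (intro mult_left_mono gb) (use \<rho> in auto)
  also have "\<dots> = ennreal (C * 2 powr (\<bar>a\<bar> + \<tau>) * (2 powr (-(a+\<tau>)))^k)"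
  proof -
    have "2 powr \<bar>a\<bar> * \<rho> powr a * (C * (2*\<rho>) powr \<tau>)
        = C * 2 powr (\<bar>a\<bar> + \<tau>) * (\<rho> powr a * \<rho> powr \<tau>)"
      using \<rho> by (simp add: powr_mult powr_add)
    also have "\<rho> powr a * \<rho> powr \<tau> = \<rho> powr (a+\<tau>)" by (simp add: powr_add)
    also have "\<dots> = (2 powr (-(a+\<tau>)))^k"
      unfolding \<rho>_def by (rule pow2_powr)
    finally show ?thesis using C \<rho> by (simp add: ennreal_mult[symmetric])
  qed
  finally show ?thesis .
qed

lemma far_shell_term:
  fixes g :: "'a::euclidean_space \<Rightarrow> ennreal" and x :: 'a
  assumes gm: "g \<in> borel_measurable lborel" and C: "0 \<le> C"
   and gb: "\<And>R. 0 < R \<Longrightarrow> (\<integral>\<^sup>+y. indicator (ball x R) y * g y \<partial>lborel) \<le> ennreal (C * R powr \<tau>)"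
  shows "(\<integral>\<^sup>+y. indicator {y. (2::real)^k \<le> dist x y \<and> dist x y < 2^Suc k} y *
            (ennreal (dist x y powr a) * g y) \<partial>lborel)
         \<le> ennreal (C * 2 powr (\<bar>a\<bar> + \<tau>) * (2 powr (a+\<tau>))^k)"
proof -
  define \<rho> :: real where "\<rho> = 2^k"
  have \<rho>: "0 < \<rho>" by (simp add: \<rho>_def)
  have "(\<integral>\<^sup>+y. indicator {y. (2::real)^k \<le> dist x y \<and> dist x y < 2^Suc k} y *
            (ennreal (dist x y powr a) * g y) \<partial>lborel)
       \<le> (\<integral>\<^sup>+y. ennreal (2 powr \<bar>a\<bar> * \<rho> powr a) * (indicator (ball x (2*\<rho>)) y * g y) \<partial>lborel)"
  proof (rule nn_integral_mono)
    fix y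
    show "indicator {y. (2::real)^k \<le> dist x y \<and> dist x y < 2^Suc k} y *
            (ennreal (dist x y powr a) * g y)
       \<le> ennreal (2 powr \<bar>a\<bar> * \<rho> powr a) * (indicator (ball x (2*\<rho>)) y * g y)"
    proof (cases "(2::real)^k \<le> dist x y \<and> dist x y < 2^Suc k")
      case True
      have le: "dist x y < 2*\<rho>" using True unfolding \<rho>_def by simp
      have ge: "\<rho> \<le> dist x y" using True unfolding \<rho>_def by simp
      have "dist x y powr a \<le> 2 powr \<bar>a\<bar> * \<rho> powr a"
        by (rule powr_shell) (use \<rho> le ge in auto)
      moreover have "y \<in> ball x (2*\<rho>)" using le \<rho> by (simp add: dist_commute)
      ultimately show ?thesis using True
        by (auto intro!: mult_right_mono ennreal_leI)
    qed simp
  qed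
  also have "\<dots> = ennreal (2 powr \<bar>a\<bar> * \<rho> powr a) * (\<integral>\<^sup>+y. indicator (ball x (2*\<rho>)) y * g y \<partial>lborel)"
    by (rule nn_integral_cmult) (use gm in \<open>auto intro!: borel_measurable_times_ennreal borel_measurable_indicator\<close>)
  also have "\<dots> \<le> ennreal (2 powr \<bar>a\<bar> * \<rho> powr a) * ennreal (C * (2*\<rho>) powr \<tau>)"
    by (intro mult_left_mono gb) (use \<rho> in auto)
  also have "\<dots> = ennreal (C * 2 powr (\<bar>a\<bar> + \<tau>) * (2 powr (a+\<tau>))^k)"
  proof -
    have "2 powr \<bar>a\<bar> * \<rho> powr a * (C * (2*\<rho>) powr \<tau>)
        = C * 2 powr (\<bar>a\<bar> + \<tau>) * (\<rho> powr a * \<rho> powr \<tau>)"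
      using \<rho> by (simp add: powr_mult powr_add)
    also have "\<rho> powr a * \<rho> powr \<tau> = \<rho> powr (a+\<tau>)" by (simp add: powr_add)
    also have "\<dots> = (2 powr (a+\<tau>))^k"
      unfolding \<rho>_def by (rule pow2_powr')
    finally show ?thesis using C \<rho> by (simp add: ennreal_mult[symmetric])
  qed
  finally show ?thesis .
qed

lemma kernel_bound:
  fixes g :: "'a::euclidean_space \<Rightarrow> ennreal" and x :: 'a
  assumes gm: "g \<in> borel_measurable lborel" and C: "0 \<le> C"
   and gb: "\<And>R. 0 < R \<Longrightarrow> (\<integral>\<^sup>+y. indicator (ball x R) y * g y \<partial>lborel) \<le> ennreal (C * R powr \<tau>)"
   and e1: "0 < 2 + e + \<tau>" and e2: "e + \<tau> < 0"
  shows "(\<integral>\<^sup>+y. ennreal (min ((dist x y)\<^sup>2) 1 * dist x y powr e) * g y \<partial>lborel)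
     \<le> ennreal (C * (2 powr (\<bar>2+e\<bar> + \<tau>) / (1 - 2 powr (-(2+e+\<tau>)))
                    + 2 powr (\<bar>e\<bar> + \<tau>) / (1 - 2 powr (e+\<tau>))))"
proof -
  note [measurable] = gm
  let ?N = "\<lambda>y. ennreal (dist x y powr (2+e)) * g y"
  let ?F = "\<lambda>y. ennreal (dist x y powr e) * g y"
  have mN: "?N \<in> borel_measurable lborel" by measurable
  have mF: "?F \<in> borel_measurable lborel" by measurable
  have mN': "(\<lambda>y. indicator {y. 1 \<le> 1 / dist x y} y * ?N y) \<in> borel_measurable lborel" by measurable
  have mF': "(\<lambda>y. indicator {y. 1 \<le> dist x y} y * ?F y) \<in> borel_measurable lborel" by measurable
  have "(\<integral>\<^sup>+y. ennreal (min ((dist x y)\<^sup>2) 1 * dist x y powr e) * g y \<partial>lborel)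
     \<le> (\<integral>\<^sup>+y. indicator {y. 1 \<le> 1 / dist x y} y * ?N y + indicator {y. 1 \<le> dist x y} y * ?F y \<partial>lborel)"
  proof (rule nn_integral_mono)
    fix y
    consider "dist x y = 0" | "0 < dist x y" "dist x y \<le> 1" | "1 < dist x y" using zero_le_dist[of x y] by linarith
    then show "ennreal (min ((dist x y)\<^sup>2) 1 * dist x y powr e) * g y
        \<le> indicator {y. 1 \<le> 1 / dist x y} y * ?N y + indicator {y. 1 \<le> dist x y} y * ?F y"
    proof cases
      case 1 then show ?thesis by simp
    next
      case 2
      have m: "min ((dist x y)\<^sup>2) 1 = (dist x y)\<^sup>2"
        using 2 power_le_one[of "dist x y" 2] by (simp add: min_def)
      have p: "(dist x y)\<^sup>2 = dist x y powr 2" using 2 by (simp add: powr_numeral)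
      have "min ((dist x y)\<^sup>2) 1 * dist x y powr e = dist x y powr (2+e)"
        unfolding m unfolding p by (simp only: powr_add)
      note h = this
      have "1 \<le> 1 / dist x y" using 2 by simp
      then show ?thesis unfolding h by (simp add: indicator_def)
    next
      case 3
      have m: "min ((dist x y)\<^sup>2) 1 = 1"
      proof -
        have "1 < (dist x y)\<^sup>2" using 3 one_less_power[of "dist x y" 2] by simp
        then show ?thesis by simp
      qed
      have n: "\<not> 1 \<le> 1 / dist x y" using 3 by (subst le_divide_eq_1) linarith
      show ?thesis unfolding m using 3 n by (simp add: indicator_def)
    qed
  qed
  also have "\<dots> = (\<integral>\<^sup>+y. indicator {y. 1 \<le> 1 / dist x y} y * ?N y \<partial>lborel)
                 + (\<integral>\<^sup>+y. indicator {y. 1 \<le> dist x y} y * ?F y \<partial>lborel)"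
    by (rule nn_integral_add[OF mN' mF'])
  also have "(\<integral>\<^sup>+y. indicator {y. 1 \<le> 1 / dist x y} y * ?N y \<partial>lborel)
      \<le> ennreal (C * (2 powr (\<bar>2+e\<bar> + \<tau>) / (1 - 2 powr (-(2+e+\<tau>)))))"
  proof -
    have "(\<integral>\<^sup>+y. indicator {y. 1 \<le> 1 / dist x y} y * ?N y \<partial>lborel)
      \<le> (\<Sum>k. \<integral>\<^sup>+y. indicator {y. (2::real)^k \<le> 1 / dist x y \<and> 1 / dist x y < 2^Suc k} y * ?N y \<partial>lborel)"
      by (rule shell_bound[where \<phi>="\<lambda>y. 1 / dist x y" and f="?N"]) measurable
    also have "\<dots> \<le> (\<Sum>k. ennreal (C * 2 powr (\<bar>2+e\<bar> + \<tau>) * (2 powr (-((2+e)+\<tau>)))^k))"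
      by (intro suminf_le near_shell_term[OF gm C gb] summableI)
    also have "\<dots> = ennreal (C * 2 powr (\<bar>2+e\<bar> + \<tau>) / (1 - 2 powr (-((2+e)+\<tau>))))"
      by (rule geom_ennreal) (use C e1 in \<open>auto intro!: powr_less_one\<close>)
    finally show ?thesis by simp
  qed
  also have "(\<integral>\<^sup>+y. indicator {y. 1 \<le> dist x y} y * ?F y \<partial>lborel)
      \<le> ennreal (C * (2 powr (\<bar>e\<bar> + \<tau>) / (1 - 2 powr (e+\<tau>))))"
  proof -
    have "(\<integral>\<^sup>+y. indicator {y. 1 \<le> dist x y} y * ?F y \<partial>lborel)
      \<le> (\<Sum>k. \<integral>\<^sup>+y. indicator {y. (2::real)^k \<le> dist x y \<and> dist x y < 2^Suc k} y * ?F y \<partial>lborel)"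
      by (rule shell_bound[where \<phi>="\<lambda>y. dist x y" and f="?F"]) measurable
    also have "\<dots> \<le> (\<Sum>k. ennreal (C * 2 powr (\<bar>e\<bar> + \<tau>) * (2 powr (e+\<tau>))^k))"
      by (intro suminf_le far_shell_term[OF gm C gb] summableI)
    also have "\<dots> = ennreal (C * 2 powr (\<bar>e\<bar> + \<tau>) / (1 - 2 powr (e+\<tau>)))"
      by (rule geom_ennreal) (use C e2 in \<open>auto intro!: powr_less_one\<close>)
    finally show ?thesis by simp
  qed
  finally have fin: "(\<integral>\<^sup>+y. ennreal (min ((dist x y)\<^sup>2) 1 * dist x y powr e) * g y \<partial>lborel)
     \<le> ennreal (C * (2 powr (\<bar>2+e\<bar> + \<tau>) / (1 - 2 powr (-(2+e+\<tau>)))))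
       + ennreal (C * (2 powr (\<bar>e\<bar> + \<tau>) / (1 - 2 powr (e+\<tau>))))"
    by (auto intro: add_mono)
  have q1: "(2::real) powr (-(2+e+\<tau>)) < 1" using e1 by (intro powr_less_one) auto
  have q2: "(2::real) powr (e+\<tau>) < 1" using e2 by (intro powr_less_one) auto
  have X: "0 \<le> C * (2 powr (\<bar>2+e\<bar> + \<tau>) / (1 - 2 powr (-(2+e+\<tau>))))"
    using q1 C by (intro mult_nonneg_nonneg divide_nonneg_nonneg) auto
  have Y: "0 \<le> C * (2 powr (\<bar>e\<bar> + \<tau>) / (1 - 2 powr (e+\<tau>)))"
    using q2 C by (intro mult_nonneg_nonneg divide_nonneg_nonneg) auto
  show ?thesis using fin ennreal_plus[OF X Y] by (simp add: distrib_left)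
qed


lemma level_measure:
  fixes D :: "'a::euclidean_space set"
  assumes cov: "\<forall>x\<in>frontier D. \<forall>r R. 0 < r \<and> r < R \<longrightarrow> (\<exists>S. finite S \<and> frontier D \<inter> ball x R \<subseteq> (\<Union>c\<in>S. ball c r) \<and> real (card S) \<le> CA * (R / r) powr s)"
   and z: "z \<in> frontier D" and t: "0 < t" "t \<le> R"
  shows "emeasure lborel {y \<in> ball z R. delta D y \<le> t}
     \<le> ennreal (CA * (3*R/t) powr s * (unit_ball_vol (real DIM('a)) * (3*t)^DIM('a)))"
proof -
  have "0 < t \<and> t < 3*R" using t by auto
  then obtain S where S: "finite S" "frontier D \<inter> ball z (3*R) \<subseteq> (\<Union>c\<in>S. ball c t)"
      "real (card S) \<le> CA * (3*R / t) powr s"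
    using cov z by blast
  have sub: "{y \<in> ball z R. delta D y \<le> t} \<subseteq> (\<Union>c\<in>S. ball c (3*t))"
  proof
    fix y assume y: "y \<in> {y \<in> ball z R. delta D y \<le> t}"
    have "infdist y (frontier D) < 2*t" using y t by (simp add: delta_def)
    then obtain w where w: "w \<in> frontier D" "dist y w < 2*t"
      using z by (auto elim!: infdist_lessE)
    have "dist z w \<le> dist z y + dist y w" by (rule dist_triangle)
    then have "dist z w < 3*R" using y w t by (simp add: dist_commute)
    then have "w \<in> frontier D \<inter> ball z (3*R)" using w by simp
    then obtain c where c: "c \<in> S" "dist c w < t" using S(2) by auto
    have "dist c y \<le> dist c w + dist w y" by (rule dist_triangle)
    then have "dist c y < 3*t" using c w by (simp add: dist_commute)
    then show "y \<in> (\<Union>c\<in>S. ball c (3*t))" using c by auto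
  qed
  let ?v = "unit_ball_vol (real DIM('a)) * (3*t)^DIM('a)"
  have v: "0 \<le> ?v" using t by simp
  have "emeasure lborel {y \<in> ball z R. delta D y \<le> t} \<le> emeasure lborel (\<Union>c\<in>S. ball c (3*t))"
    by (rule emeasure_mono[OF sub]) (auto intro!: borel_open)
  also have "\<dots> \<le> (\<Sum>c\<in>S. emeasure lborel (ball c (3*t)))"
    by (rule emeasure_subadditive_finite) (use S in auto)
  also have "\<dots> = (\<Sum>c\<in>S. ennreal ?v)"
    using t by (simp add: emeasure_ball)
  also have "\<dots> = ennreal (real (card S) * ?v)"
    using v by (simp add: ennreal_of_nat_eq_real_of_nat ennreal_mult'[symmetric])
  also have "\<dots> \<le> ennreal (CA * (3*R/t) powr s * ?v)"
    using S(3) v by (intro ennreal_leI mult_right_mono) auto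
  finally show ?thesis .
qed

lemma delta_nonneg: "0 \<le> delta D y" by (simp add: delta_def infdist_nonneg)

lemma boundary_ball:
  fixes D :: "'a::euclidean_space set"
  assumes cov: "\<forall>x\<in>frontier D. \<forall>r R. 0 < r \<and> r < R \<longrightarrow> (\<exists>S. finite S \<and> frontier D \<inter> ball x R \<subseteq> (\<Union>c\<in>S. ball c r) \<and> real (card S) \<le> CA * (R / r) powr s)"
   and z: "z \<in> frontier D" and R: "0 < R" and CA: "0 \<le> CA" and \<beta>: "0 < \<beta>"
   and sb: "\<beta> + s < real DIM('a)"
  shows "(\<integral>\<^sup>+y. indicator (ball z R) y * ennreal (delta D y powr -\<beta>) \<partial>lborel)
    \<le> ennreal ((unit_ball_vol (real DIM('a)) + 2 powr \<beta> * CA * 3 powr s * unit_ball_vol (real DIM('a)) * 3^DIM('a)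
                  / (1 - 2 powr (\<beta> + s - real DIM('a)))) * R powr (real DIM('a) - \<beta>))"
proof -
  let ?d = "real DIM('a)"
  let ?\<omega> = "unit_ball_vol ?d"
  let ?q = "(2::real) powr (\<beta> + s - ?d)"
  let ?K2 = "2 powr \<beta> * CA * 3 powr s * ?\<omega> * 3^DIM('a)"
  let ?f = "\<lambda>y. indicator (ball z R) y * ennreal (delta D y powr -\<beta>)"
  have q1: "?q < 1" using sb by (intro powr_less_one) auto
  have om: "0 \<le> ?\<omega>" by simp
  have K2: "0 \<le> ?K2" using CA by simp
  have m1: "(\<lambda>y. indicator {y. R \<le> delta D y} y * ?f y) \<in> borel_measurable lborel" by measurable
  have m2: "(\<lambda>y. indicator {y. 1 \<le> R / delta D y} y * ?f y) \<in> borel_measurable lborel" by measurable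
  have "(\<integral>\<^sup>+y. ?f y \<partial>lborel) \<le> (\<integral>\<^sup>+y. indicator {y. R \<le> delta D y} y * ?f y + indicator {y. 1 \<le> R / delta D y} y * ?f y \<partial>lborel)"
  proof (rule nn_integral_mono)
    fix y
    consider "delta D y = 0" | "R \<le> delta D y" | "0 < delta D y" "delta D y < R"
      using delta_nonneg[of D y] by linarith
    then show "?f y \<le> indicator {y. R \<le> delta D y} y * ?f y + indicator {y. 1 \<le> R / delta D y} y * ?f y"
    proof cases
      case 1 then show ?thesis by simp
    next
      case 2 then show ?thesis by (simp add: indicator_def)
    next
      case 3
      then have "1 \<le> R / delta D y" by (simp add: le_divide_eq_1)
      then show ?thesis by (simp add: indicator_def)
    qed
  qed
  also have "\<dots> = (\<integral>\<^sup>+y. indicator {y. R \<le> delta D y} y * ?f y \<partial>lborel) + (\<integral>\<^sup>+y. indicator {y. 1 \<le> R / delta D y} y * ?f y \<partial>lborel)"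
    by (rule nn_integral_add[OF m1 m2])
  also have "(\<integral>\<^sup>+y. indicator {y. R \<le> delta D y} y * ?f y \<partial>lborel) \<le> ennreal (?\<omega> * R powr (?d - \<beta>))"
  proof -
    have "(\<integral>\<^sup>+y. indicator {y. R \<le> delta D y} y * ?f y \<partial>lborel) \<le> (\<integral>\<^sup>+y. ennreal (R powr -\<beta>) * indicator (ball z R) y \<partial>lborel)"
    proof (rule nn_integral_mono)
      fix y
      show "indicator {y. R \<le> delta D y} y * ?f y \<le> ennreal (R powr -\<beta>) * indicator (ball z R) y"
      proof (cases "R \<le> delta D y")
        case True
        have "delta D y powr -\<beta> \<le> R powr -\<beta>" using True R \<beta> by (intro powr_mono2') auto
        then show ?thesis using True by (auto simp: indicator_def intro: ennreal_leI)
      qed simp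
    qed
    also have "\<dots> = ennreal (R powr -\<beta>) * emeasure lborel (ball z R)"
      by (rule nn_integral_cmult_indicator) simp
    also have "\<dots> = ennreal (?\<omega> * R powr (?d - \<beta>))"
    proof -
      have "R powr -\<beta> * (?\<omega> * R^DIM('a)) = ?\<omega> * R powr (?d - \<beta>)"
        using R by (simp add: powr_realpow[symmetric] powr_add[symmetric])
      then show ?thesis using R by (simp add: emeasure_ball ennreal_mult'[symmetric])
    qed
    finally show ?thesis .
  qed
  also have "(\<integral>\<^sup>+y. indicator {y. 1 \<le> R / delta D y} y * ?f y \<partial>lborel) \<le> ennreal (?K2 * R powr (?d - \<beta>) / (1 - ?q))"
  proof -
    have "(\<integral>\<^sup>+y. indicator {y. 1 \<le> R / delta D y} y * ?f y \<partial>lborel)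
      \<le> (\<Sum>k. \<integral>\<^sup>+y. indicator {y. (2::real)^k \<le> R / delta D y \<and> R / delta D y < 2^Suc k} y * ?f y \<partial>lborel)"
      by (rule shell_bound[where \<phi>="\<lambda>y. R / delta D y" and f="?f"]) measurable
    also have "\<dots> \<le> (\<Sum>k. ennreal (?K2 * R powr (?d - \<beta>) * ?q^k))"
    proof (intro suminf_le summableI)
      fix k :: nat
      define \<rho> where "\<rho> = R * inverse (2^k)"
      have \<rho>: "0 < \<rho>" "\<rho> \<le> R" using R by (auto simp: \<rho>_def field_simps)
      define c where "c = R powr -\<beta> * 2 powr \<beta> * (2 powr \<beta>)^k"
      have c: "0 \<le> c" by (simp add: c_def)
      have "(\<integral>\<^sup>+y. indicator {y. (2::real)^k \<le> R / delta D y \<and> R / delta D y < 2^Suc k} y * ?f y \<partial>lborel)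
          \<le> (\<integral>\<^sup>+y. ennreal c * indicator {y \<in> ball z R. delta D y \<le> \<rho>} y \<partial>lborel)"
      proof (rule nn_integral_mono)
        fix y
        show "indicator {y. (2::real)^k \<le> R / delta D y \<and> R / delta D y < 2^Suc k} y * ?f y
            \<le> ennreal c * indicator {y \<in> ball z R. delta D y \<le> \<rho>} y"
        proof (cases "(2::real)^k \<le> R / delta D y \<and> R / delta D y < 2^Suc k \<and> y \<in> ball z R")
          case True
          have dpos: "0 < delta D y"
          proof (rule ccontr)
            assume "\<not> 0 < delta D y"
            then have "delta D y = 0" using delta_nonneg[of D y] by linarith
            then have "R / delta D y = 0" by simp
            moreover have "(0::real) < 2^k" by simp
            ultimately show False using True by linarith
          qed
          have le: "delta D y \<le> \<rho>" using True dpos R unfolding \<rho>_def by (simp add: field_simps)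
          have ge: "R * inverse (2^Suc k) < delta D y" using True dpos R by (simp add: field_simps)
          have "delta D y powr -\<beta> \<le> (R * inverse (2^Suc k)) powr -\<beta>"
            using ge R \<beta> by (intro powr_mono2') auto
          also have "\<dots> = c"
          proof -
            have "(R * inverse (2^Suc k)) powr -\<beta> = R powr -\<beta> * (inverse ((2::real)^Suc k)) powr -\<beta>"
              using R by (intro powr_mult; simp)
            also have "(inverse ((2::real)^Suc k)) powr -\<beta> = (2 powr \<beta>)^Suc k"
              by (simp only: pow2_powr minus_minus)
            finally show ?thesis by (simp add: c_def mult.assoc)
          qed
          finally show ?thesis using True le by (auto simp: indicator_def intro: ennreal_leI)
        next
          case False
          then show ?thesis by (auto simp: indicator_def)
        qed
      qed
      also have "\<dots> = ennreal c * emeasure lborel {y \<in> ball z R. delta D y \<le> \<rho>}"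
        by (rule nn_integral_cmult_indicator) measurable
      also have "\<dots> \<le> ennreal c * ennreal (CA * (3*R/\<rho>) powr s * (?\<omega> * (3*\<rho>)^DIM('a)))"
        by (intro mult_left_mono level_measure[OF cov z] \<rho>) simp
      also have "\<dots> = ennreal (?K2 * R powr (?d - \<beta>) * ?q^k)"
      proof -
        have a: "3*R/\<rho> = 3 * 2^k" using R by (simp add: \<rho>_def divide_inverse)
        have b: "(3 * (2::real)^k) powr s = 3 powr s * (2 powr s)^k"
          by (simp add: powr_mult pow2_powr')
        have e: "(3*\<rho>)^DIM('a) = 3^DIM('a) * (R powr ?d * (2 powr (-?d))^k)"
        proof -
          have "\<rho>^DIM('a) = \<rho> powr ?d" using \<rho> by (simp add: powr_realpow)
          also have "\<dots> = R powr ?d * (inverse ((2::real)^k)) powr ?d"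
            using R by (simp add: \<rho>_def powr_mult)
          also have "(inverse ((2::real)^k)) powr ?d = (2 powr (-?d))^k" by (rule pow2_powr)
          finally show ?thesis by (simp add: power_mult_distrib)
        qed
        have f: "(2 powr \<beta>)^k * (2 powr s)^k * (2 powr (-?d))^k = ?q^k"
          by (simp add: power_mult_distrib[symmetric] powr_add[symmetric])
        have g: "R powr -\<beta> * R powr ?d = R powr (?d - \<beta>)"
          by (simp add: powr_add[symmetric])
        have "c * (CA * (3*R/\<rho>) powr s * (?\<omega> * (3*\<rho>)^DIM('a)))
            = ?K2 * (R powr -\<beta> * R powr ?d) * ((2 powr \<beta>)^k * (2 powr s)^k * (2 powr (-?d))^k)"
          unfolding a b e c_def by (simp add: ac_simps)
        also have "\<dots> = ?K2 * R powr (?d - \<beta>) * ?q^k" unfolding f g ..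
        finally have eq: "c * (CA * (3*R/\<rho>) powr s * (?\<omega> * (3*\<rho>)^DIM('a))) = ?K2 * R powr (?d - \<beta>) * ?q^k" .
        have X: "0 \<le> CA * (3*R/\<rho>) powr s * (?\<omega> * (3*\<rho>)^DIM('a))"
          using CA \<rho> by simp
        show ?thesis unfolding ennreal_mult[OF c X, symmetric] eq ..
      qed
      finally show "(\<integral>\<^sup>+y. indicator {y. (2::real)^k \<le> R / delta D y \<and> R / delta D y < 2^Suc k} y * ?f y \<partial>lborel)
          \<le> ennreal (?K2 * R powr (?d - \<beta>) * ?q^k)" .
    qed
    also have "\<dots> = ennreal (?K2 * R powr (?d - \<beta>) / (1 - ?q))"
      by (rule geom_ennreal) (use K2 q1 in auto)
    finally show ?thesis .
  qed
  finally have fin: "(\<integral>\<^sup>+y. ?f y \<partial>lborel) \<le> ennreal (?\<omega> * R powr (?d - \<beta>)) + ennreal (?K2 * R powr (?d - \<beta>) / (1 - ?q))"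
    by (auto intro: add_mono)
  have X: "0 \<le> ?\<omega> * R powr (?d - \<beta>)" by simp
  have Y: "0 \<le> ?K2 * R powr (?d - \<beta>) / (1 - ?q)" using K2 q1 by simp
  have "?\<omega> * R powr (?d - \<beta>) + ?K2 * R powr (?d - \<beta>) / (1 - ?q)
      = (?\<omega> + ?K2 / (1 - ?q)) * R powr (?d - \<beta>)"
    by (simp add: algebra_simps)
  then show ?thesis using fin ennreal_plus[OF X Y] by (simp add: mult.assoc)
qed


lemma general_ball:
  fixes D :: "'a::euclidean_space set"
  assumes cov: "\<forall>x\<in>frontier D. \<forall>r R. 0 < r \<and> r < R \<longrightarrow> (\<exists>S. finite S \<and> frontier D \<inter> ball x R \<subseteq> (\<Union>c\<in>S. ball c r) \<and> real (card S) \<le> CA * (R / r) powr s)"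
   and R: "0 < R" and CA: "0 \<le> CA" and \<beta>: "0 < \<beta>"
   and sb: "\<beta> + s < real DIM('a)"
  shows "(\<integral>\<^sup>+y. indicator (ball x R) y * ennreal (delta D y powr -\<beta>) \<partial>lborel)
    \<le> ennreal ((unit_ball_vol (real DIM('a)) + (unit_ball_vol (real DIM('a)) + 2 powr \<beta> * CA * 3 powr s * unit_ball_vol (real DIM('a)) * 3^DIM('a)
                  / (1 - 2 powr (\<beta> + s - real DIM('a)))) * 3 powr (real DIM('a) - \<beta>)) * R powr (real DIM('a) - \<beta>))"
    (is "?I \<le> ennreal ((?\<omega> + ?KB * ?t) * ?P)")
proof -
  let ?d = "real DIM('a)"
  have q1: "(2::real) powr (\<beta> + s - ?d) < 1" using sb by (intro powr_less_one) auto
  have KB: "0 \<le> ?KB" using CA q1 by simp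
  have om: "0 \<le> ?\<omega>" by simp
  have P: "0 \<le> ?P" by simp
  have t: "0 \<le> ?t" by simp
  consider "frontier D = {}" | "frontier D \<noteq> {}" "2*R \<le> delta D x" | "frontier D \<noteq> {}" "delta D x < 2*R"
    by linarith
  then show ?thesis
  proof cases
    case 1
    then have "\<And>y. delta D y = 0" by (simp add: delta_def infdist_def)
    then have "?I = 0" by simp
    then show ?thesis by simp
  next
    case 2
    have "?I \<le> (\<integral>\<^sup>+y. ennreal (R powr -\<beta>) * indicator (ball x R) y \<partial>lborel)"
    proof (rule nn_integral_mono)
      fix y
      show "indicator (ball x R) y * ennreal (delta D y powr -\<beta>) \<le> ennreal (R powr -\<beta>) * indicator (ball x R) y"
      proof (cases "y \<in> ball x R")
        case True
        have "delta D x \<le> delta D y + dist x y" unfolding delta_def by (rule infdist_triangle)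
        then have "R \<le> delta D y" using True 2 by (simp add: dist_commute)
        then have "delta D y powr -\<beta> \<le> R powr -\<beta>" using R \<beta> by (intro powr_mono2') auto
        then show ?thesis using True by (auto intro: ennreal_leI)
      qed simp
    qed
    also have "\<dots> = ennreal (R powr -\<beta>) * emeasure lborel (ball x R)"
      by (rule nn_integral_cmult_indicator) simp
    also have "\<dots> = ennreal (?\<omega> * ?P)"
    proof -
      have "R powr -\<beta> * (?\<omega> * R^DIM('a)) = ?\<omega> * ?P"
        using R by (simp add: powr_realpow[symmetric] powr_add[symmetric])
      then show ?thesis using R by (simp add: emeasure_ball ennreal_mult'[symmetric])
    qed
    also have "\<dots> \<le> ennreal ((?\<omega> + ?KB * ?t) * ?P)"
      using KB t P by (intro ennreal_leI mult_right_mono) auto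
    finally show ?thesis .
  next
    case 3
    then have "infdist x (frontier D) < 2*R" by (simp add: delta_def)
    then obtain z where z: "z \<in> frontier D" "dist x z < 2*R" using 3 by (auto elim!: infdist_lessE)
    have sub: "ball x R \<subseteq> ball z (3*R)"
    proof
      fix y assume "y \<in> ball x R"
      moreover have "dist z y \<le> dist z x + dist x y" by (rule dist_triangle)
      ultimately show "y \<in> ball z (3*R)" using z by (simp add: dist_commute)
    qed
    have "?I \<le> (\<integral>\<^sup>+y. indicator (ball z (3*R)) y * ennreal (delta D y powr -\<beta>) \<partial>lborel)"
      by (intro nn_integral_mono mult_right_mono) (use sub in \<open>auto simp: indicator_def\<close>)
    also have "\<dots> \<le> ennreal (?KB * (3*R) powr (?d - \<beta>))"
      by (rule boundary_ball[OF cov z(1)]) (use R CA \<beta> sb in auto)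
    also have "\<dots> = ennreal (?KB * ?t * ?P)"
      using R by (simp add: powr_mult mult.assoc)
    also have "\<dots> \<le> ennreal ((?\<omega> + ?KB * ?t) * ?P)"
      using KB t P om by (intro ennreal_leI mult_right_mono) auto
    finally show ?thesis .
  qed
qed


lemma capA_cases:
  assumes "0 < A0" "0 \<le> t"
  obtains "A0 = \<infinity>" "capA A0 t = t" | A where "A0 = ereal A" "0 < A" "capA A0 t = min t A"
proof (cases A0)
  case (real A)
  then show ?thesis using that assms by (auto simp: capA_def min_def)
next
  case PInf
  then show ?thesis using that by (auto simp: capA_def)
next
  case MInf
  then show ?thesis using assms by simp
qed

lemma capA_nonneg: "0 < A0 \<Longrightarrow> 0 \<le> t \<Longrightarrow> 0 \<le> capA A0 t"
  by (erule capA_cases) auto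

lemma capA_le: "0 < A0 \<Longrightarrow> 0 \<le> t \<Longrightarrow> capA A0 t \<le> t"
  by (erule capA_cases) auto

lemma capA_ratio:
  assumes A0: "0 < A0" and r: "0 \<le> r" and d: "0 \<le> \<delta>" and e: "0 < capA A0 \<delta>" and b: "0 \<le> \<beta>"
  shows "capA A0 r powr \<beta> / capA A0 \<delta> powr \<beta> \<le> 1 + r powr \<beta> * \<delta> powr -\<beta>"
proof -
  have X: "0 \<le> r powr \<beta> * \<delta> powr -\<beta>" by simp
  show ?thesis
  proof (rule capA_cases[OF A0 d])
    assume "A0 = \<infinity>" "capA A0 \<delta> = \<delta>"
    moreover have "capA A0 r = r" using \<open>A0 = \<infinity>\<close> by (simp add: capA_def)
    ultimately have "capA A0 r powr \<beta> / capA A0 \<delta> powr \<beta> = r powr \<beta> * \<delta> powr -\<beta>"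
      by (simp add: powr_minus divide_inverse)
    then show ?thesis by simp
  next
    fix A assume A: "A0 = ereal A" "0 < A" "capA A0 \<delta> = min \<delta> A"
    have cr: "capA A0 r = min r A" using A r by (simp add: capA_def min_def)
    show ?thesis
    proof (cases "\<delta> \<le> A")
      case True
      then have "capA A0 \<delta> = \<delta>" using A by simp
      then have dpos: "0 < \<delta>" using e by simp
      have "capA A0 r powr \<beta> \<le> r powr \<beta>" using cr r b A by (intro powr_mono2) auto
      then have "capA A0 r powr \<beta> / capA A0 \<delta> powr \<beta> \<le> r powr \<beta> / \<delta> powr \<beta>"
        unfolding \<open>capA A0 \<delta> = \<delta>\<close> using dpos by (intro divide_right_mono) auto
      also have "\<dots> = r powr \<beta> * \<delta> powr -\<beta>" by (simp add: powr_minus divide_inverse)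
      finally show ?thesis by simp
    next
      case False
      then have "capA A0 \<delta> = A" using A by simp
      have "capA A0 r powr \<beta> \<le> A powr \<beta>" using cr r b A by (intro powr_mono2) auto
      then have "capA A0 r powr \<beta> / capA A0 \<delta> powr \<beta> \<le> 1"
        using \<open>capA A0 \<delta> = A\<close> A by simp
      then show ?thesis using X by linarith
    qed
  qed
qed

lemma q_bound:
  assumes A0: "0 < A0" and r: "0 \<le> r" and dx: "0 \<le> dx" and dy: "0 \<le> dy" and b: "0 \<le> \<beta>"
  shows "((capA A0 r)\<^sup>2 / (capA A0 dx * capA A0 dy)) powr \<beta>
     \<le> (1 + r powr \<beta> * dx powr -\<beta>) * (1 + r powr \<beta> * dy powr -\<beta>)"
proof -
  have X: "0 \<le> r powr \<beta> * dx powr -\<beta>" "0 \<le> r powr \<beta> * dy powr -\<beta>" by simp_all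
  have cx: "0 \<le> capA A0 dx" "0 \<le> capA A0 dy" "0 \<le> capA A0 r"
    using capA_nonneg A0 r dx dy by auto
  show ?thesis
  proof (cases "capA A0 dx = 0 \<or> capA A0 dy = 0")
    case True
    then show ?thesis using X by auto
  next
    case False
    then have p: "0 < capA A0 dx" "0 < capA A0 dy" using cx by auto
    have "((capA A0 r)\<^sup>2 / (capA A0 dx * capA A0 dy)) powr \<beta>
        = (capA A0 r powr \<beta> / capA A0 dx powr \<beta>) * (capA A0 r powr \<beta> / capA A0 dy powr \<beta>)"
      using p cx by (simp add: powr_divide powr_mult power2_eq_square)
    also have "\<dots> \<le> (1 + r powr \<beta> * dx powr -\<beta>) * (1 + r powr \<beta> * dy powr -\<beta>)"
      by (intro mult_mono capA_ratio A0 r dx dy p b) (use X in auto)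
    finally show ?thesis .
  qed
qed

lemma Phi_bound:
  fixes \<Phi> :: "real \<Rightarrow> real"
  assumes mono: "mono_on {0..} \<Phi>" and ge1: "\<forall>t\<ge>0. \<Phi> t \<ge> 1"
    and C0: "\<forall>s r. 0 < s \<and> s \<le> r \<longrightarrow> \<Phi> r / \<Phi> s \<le> C0 * (r / s) powr \<beta>0"
    and b: "0 \<le> \<beta>0" "\<beta>0 \<le> \<beta>" and q: "0 \<le> q"
  shows "\<Phi> q \<le> \<Phi> 1 * max 1 C0 * max 1 (q powr \<beta>)"
proof (cases "q \<le> 1")
  case True
  then have "\<Phi> q \<le> \<Phi> 1" using mono q by (auto simp: mono_on_def)
  moreover have "\<Phi> 1 \<le> \<Phi> 1 * max 1 C0 * max 1 (q powr \<beta>)"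
  proof -
    have m1: "1 \<le> max 1 C0" by simp
    have m2: "1 \<le> max 1 (q powr \<beta>)" by simp
    have "1 \<le> max 1 C0 * max 1 (q powr \<beta>)" using mult_mono[OF m1 m2] by simp
    moreover have "0 \<le> \<Phi> 1" using ge1 by (metis zero_le_one order_trans)
    ultimately have "\<Phi> 1 * 1 \<le> \<Phi> 1 * (max 1 C0 * max 1 (q powr \<beta>))" by (intro mult_left_mono)
    then show ?thesis by (simp add: mult.assoc)
  qed
  ultimately show ?thesis by linarith
next
  case False
  have "\<Phi> q / \<Phi> 1 \<le> C0 * (q / 1) powr \<beta>0" using C0[rule_format, of 1 q] False by simp
  moreover have "0 < \<Phi> 1" using ge1 by (metis zero_less_one less_le_trans order.refl zero_le_one)
  ultimately have "\<Phi> q \<le> \<Phi> 1 * (C0 * q powr \<beta>0)" by (simp add: divide_le_eq mult.commute)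
  also have "\<dots> \<le> \<Phi> 1 * (max 1 C0 * max 1 (q powr \<beta>))"
  proof -
    have "q powr \<beta>0 \<le> q powr \<beta>" using False b by (intro powr_mono) auto
    then have "C0 * q powr \<beta>0 \<le> max 1 C0 * max 1 (q powr \<beta>)"
      by (intro mult_mono) auto
    then show ?thesis using ge1[rule_format, of 1] by (intro mult_left_mono) auto
  qed
  finally show ?thesis by (simp add: mult.assoc)
qed


lemma extract_params:
  fixes D :: "'a::euclidean_space set" and \<Phi> :: "real \<Rightarrow> real"
  assumes alpha: "0 < \<alpha>"
    and assouad: "assouad_dim (frontier D) < ereal (real DIM('a))"
    and Phi_index: "upper_matuszewska \<Phi> <
                      min (ereal (real DIM('a)) - assouad_dim (frontier D)) (ereal \<alpha>)"
  obtains \<beta> \<beta>0 C0 s CA where "0 \<le> \<beta>0" "\<beta>0 \<le> \<beta>" "0 < \<beta>" "\<beta> < \<alpha>" "\<beta> + s < real DIM('a)" "0 \<le> CA"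
    "\<forall>s r. 0 < s \<and> s \<le> r \<longrightarrow> \<Phi> r / \<Phi> s \<le> C0 * (r / s) powr \<beta>0"
    "\<forall>x\<in>frontier D. \<forall>r R. 0 < r \<and> r < R \<longrightarrow> (\<exists>S. finite S \<and> frontier D \<inter> ball x R \<subseteq> (\<Union>c\<in>S. ball c r) \<and> real (card S) \<le> CA * (R / r) powr s)"
proof -
  let ?d = "real DIM('a)"
  let ?A = "{s::real. s \<ge> 0 \<and> (\<exists>C::real. \<forall>x\<in>frontier D. \<forall>r R. 0 < r \<and> r < R \<longrightarrow>
      (\<exists>S. finite S \<and> frontier D \<inter> ball x R \<subseteq> (\<Union>c\<in>S. ball c r) \<and> real (card S) \<le> C * (R / r) powr s))}"
  have dA: "assouad_dim (frontier D) = Inf (ereal ` ?A)" by (simp add: assouad_dim_def)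
  have dA0: "0 \<le> assouad_dim (frontier D)" unfolding dA by (auto intro!: Inf_greatest)
  obtain a where a: "assouad_dim (frontier D) = ereal a" "0 \<le> a"
    using dA0 assouad by (cases "assouad_dim (frontier D)") auto
  define B where "B = {\<beta>::real. \<beta> \<ge> 0 \<and> (\<exists>C::real. \<forall>s r. 0 < s \<and> s \<le> r \<longrightarrow> \<Phi> r / \<Phi> s \<le> C * (r / s) powr \<beta>)}"
  have "Inf (ereal ` B) < min (ereal ?d - assouad_dim (frontier D)) (ereal \<alpha>)"
    using Phi_index unfolding upper_matuszewska_def B_def .
  then have "\<exists>x\<in>ereal ` B. x < min (ereal ?d - assouad_dim (frontier D)) (ereal \<alpha>)"
    by (simp only: Inf_less_iff)
  then obtain \<beta>0 where b0': "\<beta>0 \<in> B" "ereal \<beta>0 < min (ereal ?d - assouad_dim (frontier D)) (ereal \<alpha>)"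
    by blast
  then have b0: "\<beta>0 \<ge> 0" "\<exists>C::real. \<forall>s r. 0 < s \<and> s \<le> r \<longrightarrow> \<Phi> r / \<Phi> s \<le> C * (r / s) powr \<beta>0"
      "ereal \<beta>0 < min (ereal ?d - assouad_dim (frontier D)) (ereal \<alpha>)"
    unfolding B_def by auto
  then obtain C0 where C0: "\<forall>s r. 0 < s \<and> s \<le> r \<longrightarrow> \<Phi> r / \<Phi> s \<le> C0 * (r / s) powr \<beta>0" by blast
  have lt: "\<beta>0 < \<alpha>" "\<beta>0 < ?d - a" using b0(3) a by auto
  define \<beta> where "\<beta> = (\<beta>0 + min \<alpha> (?d - a)) / 2"
  have \<beta>: "\<beta>0 \<le> \<beta>" "0 < \<beta>" "\<beta> < \<alpha>" "\<beta> < ?d - a"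
    using lt b0(1) unfolding \<beta>_def by (auto simp: min_def)
  have "Inf (ereal ` ?A) < ereal (?d - \<beta>)" using a \<beta> dA by simp
  then have "\<exists>x\<in>ereal ` ?A. x < ereal (?d - \<beta>)" by (simp only: Inf_less_iff)
  then obtain s where s: "s \<in> ?A" "s < ?d - \<beta>" by auto
  then obtain CA where CA: "\<forall>x\<in>frontier D. \<forall>r R. 0 < r \<and> r < R \<longrightarrow>
      (\<exists>S. finite S \<and> frontier D \<inter> ball x R \<subseteq> (\<Union>c\<in>S. ball c r) \<and> real (card S) \<le> CA * (R / r) powr s)"
    by blast
  have CA': "\<forall>x\<in>frontier D. \<forall>r R. 0 < r \<and> r < R \<longrightarrow>
      (\<exists>S. finite S \<and> frontier D \<inter> ball x R \<subseteq> (\<Union>c\<in>S. ball c r) \<and> real (card S) \<le> max CA 0 * (R / r) powr s)"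
  proof (intro ballI allI impI)
    fix x and r R :: real assume "x \<in> frontier D" "0 < r \<and> r < R"
    then obtain S where S: "finite S" "frontier D \<inter> ball x R \<subseteq> (\<Union>c\<in>S. ball c r)" "real (card S) \<le> CA * (R / r) powr s"
      using CA by blast
    have "CA * (R / r) powr s \<le> max CA 0 * (R / r) powr s" by (intro mult_right_mono) auto
    then show "\<exists>S. finite S \<and> frontier D \<inter> ball x R \<subseteq> (\<Union>c\<in>S. ball c r) \<and> real (card S) \<le> max CA 0 * (R / r) powr s"
      using S by (intro exI[of _ S]) auto
  qed
  show ?thesis
    by (rule that[of \<beta>0 \<beta> s "max CA 0" C0]) (use b0(1) \<beta> s C0 CA' in auto)
qed


lemma ring_aux: "(m::real) * E * (1 + P * wx) * (1 + P * wy)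
   = m * E + wx * (m * (E * P)) + (m * (E * P)) * wy + wx * ((m * (E * (P * P))) * wy)"
  by (simp add: algebra_simps)

lemma expand_T:
  fixes m r e0 \<beta> wx wy :: real
  assumes m: "0 \<le> m" and wx: "0 \<le> wx" and wy: "0 \<le> wy"
  shows "ennreal (m * r powr e0 * (1 + r powr \<beta> * wx) * (1 + r powr \<beta> * wy))
    = ennreal (m * r powr e0) + ennreal wx * ennreal (m * r powr (e0+\<beta>))
      + ennreal (m * r powr (e0+\<beta>)) * ennreal wy
      + ennreal wx * (ennreal (m * r powr (e0 + 2*\<beta>)) * ennreal wy)"
proof -
  have h1: "r powr (e0+\<beta>) = r powr e0 * r powr \<beta>" by (rule powr_add)
  have h2: "r powr (e0 + 2*\<beta>) = r powr e0 * (r powr \<beta> * r powr \<beta>)"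
    by (simp only: mult_2 powr_add)
  have n1: "0 \<le> m * r powr e0" "0 \<le> m * r powr (e0+\<beta>)" "0 \<le> m * r powr (e0 + 2*\<beta>)"
    using m by simp_all
  have n2: "0 \<le> wx * (m * r powr (e0+\<beta>))" "0 \<le> m * r powr (e0+\<beta>) * wy"
     "0 \<le> wx * (m * r powr (e0 + 2*\<beta>) * wy)"
    using n1 wx wy by simp_all
  have "m * r powr e0 * (1 + r powr \<beta> * wx) * (1 + r powr \<beta> * wy)
      = m * r powr e0 + wx * (m * r powr (e0+\<beta>)) + (m * r powr (e0+\<beta>)) * wy
        + wx * ((m * r powr (e0 + 2*\<beta>)) * wy)"
    unfolding h1 h2 by (rule ring_aux)
  also have "ennreal \<dots> = ennreal (m * r powr e0) + ennreal (wx * (m * r powr (e0+\<beta>)))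
      + ennreal (m * r powr (e0+\<beta>) * wy) + ennreal (wx * (m * r powr (e0 + 2*\<beta>) * wy))"
    using n1 n2 by (simp add: ennreal_plus add_nonneg_nonneg)
  also have "\<dots> = ennreal (m * r powr e0) + ennreal wx * ennreal (m * r powr (e0+\<beta>))
      + ennreal (m * r powr (e0+\<beta>)) * ennreal wy
      + ennreal wx * (ennreal (m * r powr (e0 + 2*\<beta>)) * ennreal wy)"
    using n1 wx wy by (simp add: ennreal_mult)
  finally show ?thesis .
qed

lemma point_bound:
  fixes \<Phi> :: "real \<Rightarrow> real"
  assumes mono: "mono_on {0..} \<Phi>" and ge1: "\<forall>t\<ge>0. \<Phi> t \<ge> 1"
    and C0: "\<forall>s r. 0 < s \<and> s \<le> r \<longrightarrow> \<Phi> r / \<Phi> s \<le> C0 * (r / s) powr \<beta>0"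
    and b: "0 \<le> \<beta>0" "\<beta>0 \<le> \<beta>"
    and A0: "0 < A0" and r: "0 < r" and dx: "0 \<le> dx" and dy: "0 \<le> dy" and C1: "0 \<le> C1"
    and Jb: "J * r powr p / \<Phi> ((capA A0 r)\<^sup>2 / (capA A0 dx * capA A0 dy)) \<le> C1"
    and uu: "U \<le> c0 * min (r\<^sup>2) 1" and U: "0 \<le> U"
  shows "U * J \<le> c0 * C1 * (\<Phi> 1 * max 1 C0) * (min (r\<^sup>2) 1 * r powr (-p) * (1 + r powr \<beta> * dx powr -\<beta>) * (1 + r powr \<beta> * dy powr -\<beta>))"
proof -
  define q where "q = (capA A0 r)\<^sup>2 / (capA A0 dx * capA A0 dy)"
  define X where "X = 1 + r powr \<beta> * dx powr -\<beta>"
  define Y where "Y = 1 + r powr \<beta> * dy powr -\<beta>"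
  define K where "K = \<Phi> 1 * max 1 C0"
  have q0: "0 \<le> q" unfolding q_def using capA_nonneg[OF A0] r dx dy by simp
  have X1: "1 \<le> X" unfolding X_def by simp
  have Y1: "1 \<le> Y" unfolding Y_def by simp
  have "1 * 1 \<le> X * Y" by (rule mult_mono) (use X1 Y1 in linarith)+
  then have Pq: "1 \<le> X * Y" by simp
  have Phq: "1 \<le> \<Phi> q" using ge1 q0 by simp
  have P1: "1 \<le> \<Phi> 1" using ge1 by simp
  have K0: "0 \<le> K" unfolding K_def using P1 by (intro mult_nonneg_nonneg) auto
  have "\<Phi> q \<le> K * max 1 (q powr \<beta>)"
    unfolding K_def by (rule Phi_bound[OF mono ge1 C0 b q0])
  also have "max 1 (q powr \<beta>) \<le> X * Y"
  proof (rule max.boundedI)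
    show "q powr \<beta> \<le> X * Y" unfolding q_def X_def Y_def
      by (rule q_bound[OF A0 less_imp_le[OF r] dx dy]) (use b in linarith)
  qed (rule Pq)
  then have "K * max 1 (q powr \<beta>) \<le> K * (X * Y)" using K0 by (rule mult_left_mono)
  finally have Phi_le: "\<Phi> q \<le> K * (X * Y)" .
  have Phpos: "0 < \<Phi> q" using Phq by linarith
  have "J * r powr p \<le> C1 * \<Phi> q" using Jb unfolding q_def[symmetric] pos_divide_le_eq[OF Phpos] .
  also have "\<dots> \<le> C1 * (K * (X * Y))" using Phi_le C1 by (rule mult_left_mono)
  finally have Jr: "J * r powr p \<le> C1 * (K * (X * Y))" .
  have rp: "0 < r powr p" using r by simp
  have "J \<le> C1 * (K * (X * Y)) / r powr p" unfolding pos_le_divide_eq[OF rp] by (rule Jr)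
  also have "\<dots> = C1 * (K * (X * Y)) * r powr (-p)" by (simp add: powr_minus divide_inverse)
  finally have J: "J \<le> C1 * (K * (X * Y)) * r powr (-p)" .
  have XY0: "0 \<le> X * Y" using Pq by linarith
  have RJ: "0 \<le> C1 * (K * (X * Y)) * r powr (-p)"
    using C1 K0 XY0 by simp
  have "U * J \<le> U * (C1 * (K * (X * Y)) * r powr (-p))" using J U by (rule mult_left_mono)
  also have "\<dots> \<le> (c0 * min (r\<^sup>2) 1) * (C1 * (K * (X * Y)) * r powr (-p))"
    using uu RJ by (rule mult_right_mono)
  also have "\<dots> = c0 * C1 * K * (min (r\<^sup>2) 1 * r powr (-p) * X * Y)"
    by (simp only: ac_simps)
  finally show ?thesis unfolding K_def X_def Y_def .
qed


lemma kernel_bound_uniform: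
  fixes g :: "'a::euclidean_space \<Rightarrow> ennreal"
  assumes gm: "g \<in> borel_measurable lborel" and C: "0 \<le> C"
   and gb: "\<And>x R. 0 < R \<Longrightarrow> (\<integral>\<^sup>+y. indicator (ball x R) y * g y \<partial>lborel) \<le> ennreal (C * R powr \<tau>)"
   and e1: "0 < 2 + e + \<tau>" and e2: "e + \<tau> < 0"
  shows "\<exists>B. \<forall>x. (\<integral>\<^sup>+y. ennreal (min ((dist x y)\<^sup>2) 1 * dist x y powr e) * g y \<partial>lborel) \<le> ennreal B"
  by (rule exI, rule allI, rule kernel_bound[OF gm C _ e1 e2], rule gb)





theorem proposition3p1:
  fixes D :: "'a::euclidean_space set"
    and J :: "'a \<Rightarrow> 'a \<Rightarrow> real"
    and \<Phi> :: "real \<Rightarrow> real"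
    and \<alpha> \<kappa> R0 C1 :: real
    and A0 :: ereal
    and u :: "'a \<Rightarrow> real"
  assumes alpha: "0 < \<alpha>" "\<alpha> < 2"
    and fat: "kappa_fat \<kappa> R0 D"
    and assouad: "assouad_dim (frontier D) < ereal (real DIM('a))"
    and J_borel: "(\<lambda>p. indicator (D \<times> D) p * J (fst p) (snd p)) \<in> borel_measurable (lborel \<Otimes>\<^sub>M lborel)"
    and J_sym: "\<forall>x\<in>D. \<forall>y\<in>D. J x y = J y x"
    and Phi_cont: "continuous_on {0..} \<Phi>"
    and Phi_mono: "mono_on {0..} \<Phi>"
    and Phi_ge1: "\<forall>t\<ge>0. \<Phi> t \<ge> 1"
    and Phi0: "\<Phi> 0 = 1"
    and Phi_index: "upper_matuszewska \<Phi> <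
                      min (ereal (real DIM('a)) - assouad_dim (frontier D)) (ereal \<alpha>)"
    and A0: "0 < A0"
    and C1: "C1 > 1"
    and J_bounds: "\<forall>x\<in>D. \<forall>y\<in>D. x \<noteq> y \<longrightarrow>
        (let q = J x y * dist x y powr (real DIM('a) + \<alpha>) /
                 \<Phi> ((capA A0 (dist x y))\<^sup>2 / (capA A0 (delta D x) * capA A0 (delta D y)))
         in inverse C1 \<le> q \<and> q \<le> C1)"
    and u_lip: "\<exists>L. lipschitz_on L (closure D) u"
    and u_supp: "compact (closure {x \<in> closure D. u x \<noteq> 0})"
  shows "energy D J u < \<infinity>"
proof -
  let ?d = "real DIM('a)"
  let ?\<omega> = "unit_ball_vol (real DIM('a))"
  obtain \<beta> \<beta>0 C0 s CA where pr: "0 \<le> \<beta>0" "\<beta>0 \<le> \<beta>" "0 < \<beta>" "\<beta> < \<alpha>" "\<beta> + s < ?d" "0 \<le> CA"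
    and C0: "\<forall>s r. 0 < s \<and> s \<le> r \<longrightarrow> \<Phi> r / \<Phi> s \<le> C0 * (r / s) powr \<beta>0"
    and cov: "\<forall>x\<in>frontier D. \<forall>r R. 0 < r \<and> r < R \<longrightarrow> (\<exists>S. finite S \<and> frontier D \<inter> ball x R \<subseteq> (\<Union>c\<in>S. ball c r) \<and> real (card S) \<le> CA * (R / r) powr s)"
    by (rule extract_params[OF alpha(1) assouad Phi_index])
  define KG where "KG = (?\<omega> + (?\<omega> + 2 powr \<beta> * CA * 3 powr s * ?\<omega> * 3^DIM('a)
                  / (1 - 2 powr (\<beta> + s - ?d))) * 3 powr (?d - \<beta>))"
  have q1: "(2::real) powr (\<beta> + s - ?d) < 1" using pr by (intro powr_less_one) auto
  have KG0: "0 \<le> KG" unfolding KG_def using pr q1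
    by (intro add_nonneg_nonneg mult_nonneg_nonneg divide_nonneg_nonneg) auto
  define w where "w = (\<lambda>y. delta D y powr -\<beta>)"
  have w0: "\<And>y. 0 \<le> w y" by (simp add: w_def)
  have wm[measurable]: "(\<lambda>y. ennreal (w y)) \<in> borel_measurable lborel" unfolding w_def by measurable
  have wm'[measurable]: "w \<in> borel_measurable lborel" unfolding w_def by measurable
  have gball: "\<And>x R. 0 < R \<Longrightarrow> (\<integral>\<^sup>+y. indicator (ball x R) y * ennreal (w y) \<partial>lborel) \<le> ennreal (KG * R powr (?d - \<beta>))"
    unfolding w_def KG_def by (rule general_ball[OF cov]) (use pr in auto)
  have oball: "\<And>(x::'a) R. 0 < R \<Longrightarrow> (\<integral>\<^sup>+y. indicator (ball x R) y * 1 \<partial>lborel) \<le> ennreal (?\<omega> * R powr ?d)"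
    by (simp add: emeasure_ball powr_realpow)
  obtain L where L: "lipschitz_on L (closure D) u" using u_lip by blast
  have L0: "0 \<le> L" using L by (simp add: lipschitz_on_def)
  have Lu: "\<And>x y. x \<in> closure D \<Longrightarrow> y \<in> closure D \<Longrightarrow> \<bar>u x - u y\<bar> \<le> L * dist x y"
    using L by (auto simp: lipschitz_on_def dist_real_def)
  define S where "S = closure {x \<in> closure D. u x \<noteq> 0}"
  have Sc: "compact S" using u_supp by (simp add: S_def)
  obtain \<rho> where \<rho>: "0 < \<rho>" "S \<subseteq> ball 0 \<rho>"
    using bounded_subset_ballD[OF compact_imp_bounded[OF Sc], of 0] by blast
  have suppS: "\<And>x. x \<in> closure D \<Longrightarrow> u x \<noteq> 0 \<Longrightarrow> x \<in> S"
  proof -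
    fix x assume "x \<in> closure D" "u x \<noteq> 0"
    then have "x \<in> {x \<in> closure D. u x \<noteq> 0}" by simp
    then show "x \<in> S" unfolding S_def by (rule rev_subsetD[OF _ closure_subset])
  qed
  have Sb[measurable]: "S \<in> sets borel" using Sc by (simp add: compact_imp_closed borel_closed)
  obtain M where M: "0 \<le> M" "\<And>x. x \<in> closure D \<Longrightarrow> \<bar>u x\<bar> \<le> M"
  proof (cases "\<exists>x0\<in>closure D. u x0 \<noteq> 0")
    case False
    show ?thesis by (rule that[of 0]) (use False in auto)
  next
    case True
    then obtain x0 where x0: "x0 \<in> closure D" "u x0 \<noteq> 0" by blast
    have "\<bar>u x\<bar> \<le> \<bar>u x0\<bar> + L * (2*\<rho>)" if x: "x \<in> closure D" for x
    proof (cases "u x = 0")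
      case False
      then have "x \<in> S" "x0 \<in> S" using suppS x x0 by auto
      then have "dist 0 x < \<rho>" "dist 0 x0 < \<rho>" using \<rho> by auto
      moreover have "dist x x0 \<le> dist 0 x + dist 0 x0" by (rule dist_triangle3)
      ultimately have dxx: "dist x x0 \<le> 2*\<rho>" by linarith
      have "\<bar>u x - u x0\<bar> \<le> L * dist x x0" using Lu x x0 by auto
      also have "\<dots> \<le> L * (2*\<rho>)" by (rule mult_left_mono[OF dxx L0])
      finally show ?thesis by linarith
    qed (use L0 \<rho> in simp)
    then show ?thesis by (intro that[of "\<bar>u x0\<bar> + L*(2*\<rho>)"]) (use L0 \<rho> in auto)
  qed
  define c0 where "c0 = max (L^2) (4*M^2)"
  have uu: "(u x - u y)^2 \<le> c0 * min ((dist x y)^2) 1" if x: "x \<in> closure D" and y: "y \<in> closure D" for x y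
  proof -
    have a1: "\<bar>u x - u y\<bar> \<le> L * dist x y" using Lu x y by auto
    have a2: "\<bar>u x - u y\<bar> \<le> 2*M" using M(2)[OF x] M(2)[OF y] by linarith
    have b1: "(u x - u y)^2 \<le> L^2 * (dist x y)^2"
      using power_mono[OF a1, of 2] by (simp add: power_mult_distrib)
    have b2: "(u x - u y)^2 \<le> 4*M^2"
      using power_mono[OF a2, of 2] by (simp add: power_mult_distrib)
    show ?thesis
    proof (cases "dist x y \<le> 1")
      case True
      then have "(dist x y)^2 \<le> 1" by (simp add: power_le_one)
      then have "min ((dist x y)^2) 1 = (dist x y)^2" by simp
      moreover have "L^2 * (dist x y)^2 \<le> c0 * (dist x y)^2"
        unfolding c0_def by (intro mult_right_mono) auto
      ultimately show ?thesis using b1 by simp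
    next
      case False
      then have "1 < (dist x y)^2" using one_less_power[of "dist x y" 2] by simp
      then have "min ((dist x y)^2) 1 = 1" by simp
      then show ?thesis using b2 unfolding c0_def by simp
    qed
  qed
  have c00: "0 \<le> c0" unfolding c0_def by (rule order_trans[OF zero_le_power2 max.cobounded1])
  define e0 where "e0 = -(?d + \<alpha>)"
  define T where "T = (\<lambda>x y.
      ennreal (min ((dist x y)\<^sup>2) 1 * dist x y powr e0)
    + ennreal (w x) * ennreal (min ((dist x y)\<^sup>2) 1 * dist x y powr (e0+\<beta>))
    + ennreal (min ((dist x y)\<^sup>2) 1 * dist x y powr (e0+\<beta>)) * ennreal (w y)
    + ennreal (w x) * (ennreal (min ((dist x y)\<^sup>2) 1 * dist x y powr (e0 + 2*\<beta>)) * ennreal (w y)))"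
  have Tsym: "T x y = T y x" for x y
    unfolding T_def by (simp add: dist_commute ac_simps)
  define Cst where "Cst = c0 * C1 * (\<Phi> 1 * max 1 C0)"
  have pw: "indicator (D \<times> D) (x, y) * ennreal ((u x - u y)^2 * J x y)
      \<le> ennreal Cst * ((indicator S x + indicator S y) * T x y)" for x y
  proof -
    consider (out) "(x, y) \<notin> D \<times> D" | (eq) "x \<in> D" "y \<in> D" "x = y"
      | (zz) "x \<in> D" "y \<in> D" "x \<noteq> y" "x \<notin> S" "y \<notin> S"
      | (main) "x \<in> D" "y \<in> D" "x \<noteq> y" "x \<in> S \<or> y \<in> S" by auto
    then show ?thesis
    proof cases
      case out then show ?thesis by simp
    next
      case eq then show ?thesis by simp
    next
      case zz
      have "x \<in> closure D" "y \<in> closure D" using zz closure_subset by auto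
      then have "u x = 0" "u y = 0" using suppS zz by auto
      then show ?thesis by simp
    next
      case main
      let ?r = "dist x y"
      have r: "0 < ?r" using main by simp
      have xc: "x \<in> closure D" "y \<in> closure D" using main closure_subset by auto
      have Jb: "J x y * ?r powr (?d + \<alpha>) / \<Phi> ((capA A0 ?r)\<^sup>2 / (capA A0 (delta D x) * capA A0 (delta D y))) \<le> C1"
        using J_bounds main by (auto simp: Let_def)
      have C10: "0 \<le> C1" using C1 by simp
      have pb: "(u x - u y)^2 * J x y \<le> Cst * (min (?r\<^sup>2) 1 * ?r powr e0 * (1 + ?r powr \<beta> * w x) * (1 + ?r powr \<beta> * w y))"
        using point_bound[OF Phi_mono Phi_ge1 C0 pr(1) pr(2) A0 r delta_nonneg delta_nonneg C10 Jb uu[OF xc] zero_le_power2]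
        unfolding Cst_def e0_def w_def .
      have m0: "0 \<le> min (?r\<^sup>2) 1" by simp
      have Tx: "ennreal (min (?r\<^sup>2) 1 * ?r powr e0 * (1 + ?r powr \<beta> * w x) * (1 + ?r powr \<beta> * w y)) = T x y"
        unfolding T_def by (rule expand_T[OF m0 w0 w0])
      have Cst0: "0 \<le> Cst" unfolding Cst_def using c00 C10 Phi_ge1
        by (intro mult_nonneg_nonneg) (auto intro: order_trans[OF zero_le_one])
      have T0: "0 \<le> min (?r\<^sup>2) 1 * ?r powr e0 * (1 + ?r powr \<beta> * w x) * (1 + ?r powr \<beta> * w y)"
        using w0 by simp
      have "indicator (D \<times> D) (x, y) * ennreal ((u x - u y)^2 * J x y) = ennreal ((u x - u y)^2 * J x y)"
        using main by simp
      also have "\<dots> \<le> ennreal (Cst * (min (?r\<^sup>2) 1 * ?r powr e0 * (1 + ?r powr \<beta> * w x) * (1 + ?r powr \<beta> * w y)))"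
        using pb by (rule ennreal_leI)
      also have "\<dots> = ennreal Cst * T x y" using Cst0 T0 by (simp add: ennreal_mult Tx)
      also have "\<dots> \<le> ennreal Cst * ((indicator S x + indicator S y) * T x y)"
      proof -
        have "1 \<le> (indicator S x + indicator S y :: ennreal)" using main(4) by (auto simp: indicator_def)
        then have "T x y \<le> (indicator S x + indicator S y) * T x y"
          using mult_right_mono[of 1 "indicator S x + indicator S y :: ennreal" "T x y"] by simp
        then show ?thesis by (rule mult_left_mono) simp
      qed
      finally show ?thesis .
    qed
  qed
  have Tm: "(\<lambda>p. T (fst p) (snd p)) \<in> borel_measurable (lborel \<Otimes>\<^sub>M lborel)"
    unfolding T_def by measurable
  have Tm1: "(\<lambda>p. indicator S (fst p) * T (fst p) (snd p)) \<in> borel_measurable (lborel \<Otimes>\<^sub>M lborel)"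
    unfolding T_def by measurable
  have Tm2: "(\<lambda>p. indicator S (snd p) * T (fst p) (snd p)) \<in> borel_measurable (lborel \<Otimes>\<^sub>M lborel)"
    unfolding T_def by measurable
  have Tmx: "T x \<in> borel_measurable lborel" for x
    unfolding T_def by measurable
  have one_m: "(\<lambda>_. 1::ennreal) \<in> borel_measurable lborel" by simp
  have om0: "0 \<le> ?\<omega>" by simp
  have "\<exists>B. \<forall>x::'a. (\<integral>\<^sup>+y. ennreal (min ((dist x y)\<^sup>2) 1 * dist x y powr e0) * 1 \<partial>lborel) \<le> ennreal B"
    by (rule kernel_bound_uniform[where g="\<lambda>_. 1" and C="?\<omega>" and \<tau>="?d"], rule one_m, rule om0, erule oball)
       (use alpha in \<open>simp_all add: e0_def\<close>)
  then obtain B0 where B0: "\<And>x::'a. (\<integral>\<^sup>+y. ennreal (min ((dist x y)\<^sup>2) 1 * dist x y powr e0) \<partial>lborel) \<le> ennreal B0"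
    by auto
  have "\<exists>B. \<forall>x::'a. (\<integral>\<^sup>+y. ennreal (min ((dist x y)\<^sup>2) 1 * dist x y powr (e0+\<beta>)) * 1 \<partial>lborel) \<le> ennreal B"
    by (rule kernel_bound_uniform[where g="\<lambda>_. 1" and C="?\<omega>" and \<tau>="?d"], rule one_m, rule om0, erule oball)
       (use alpha pr in \<open>simp_all add: e0_def\<close>)
  then obtain B1 where B1: "\<And>x::'a. (\<integral>\<^sup>+y. ennreal (min ((dist x y)\<^sup>2) 1 * dist x y powr (e0+\<beta>)) \<partial>lborel) \<le> ennreal B1"
    by auto
  have "\<exists>B. \<forall>x::'a. (\<integral>\<^sup>+y. ennreal (min ((dist x y)\<^sup>2) 1 * dist x y powr (e0+\<beta>)) * ennreal (w y) \<partial>lborel) \<le> ennreal B"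
    by (rule kernel_bound_uniform[where g="\<lambda>y. ennreal (w y)" and C="KG" and \<tau>="?d - \<beta>"], rule wm, rule KG0, erule gball)
       (use alpha pr in \<open>simp_all add: e0_def\<close>)
  then obtain B2 where B2: "\<And>x::'a. (\<integral>\<^sup>+y. ennreal (min ((dist x y)\<^sup>2) 1 * dist x y powr (e0+\<beta>)) * ennreal (w y) \<partial>lborel) \<le> ennreal B2"
    by auto
  have "\<exists>B. \<forall>x::'a. (\<integral>\<^sup>+y. ennreal (min ((dist x y)\<^sup>2) 1 * dist x y powr (e0+2*\<beta>)) * ennreal (w y) \<partial>lborel) \<le> ennreal B"
    by (rule kernel_bound_uniform[where g="\<lambda>y. ennreal (w y)" and C="KG" and \<tau>="?d - \<beta>"], rule wm, rule KG0, erule gball)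
       (use alpha pr in \<open>simp_all add: e0_def\<close>)
  then obtain B3 where B3: "\<And>x::'a. (\<integral>\<^sup>+y. ennreal (min ((dist x y)\<^sup>2) 1 * dist x y powr (e0+2*\<beta>)) * ennreal (w y) \<partial>lborel) \<le> ennreal B3"
    by auto
  define c1 where "c1 = ennreal B0 + ennreal B2"
  define c2 where "c2 = ennreal B1 + ennreal B3"
  have inner: "(\<integral>\<^sup>+y. T x y \<partial>lborel) \<le> c1 + ennreal (w x) * c2" for x
  proof -
    let ?A0 = "\<lambda>y. ennreal (min ((dist x y)\<^sup>2) 1 * dist x y powr e0)"
    let ?A1 = "\<lambda>y. ennreal (w x) * ennreal (min ((dist x y)\<^sup>2) 1 * dist x y powr (e0+\<beta>))"
    let ?A2 = "\<lambda>y. ennreal (min ((dist x y)\<^sup>2) 1 * dist x y powr (e0+\<beta>)) * ennreal (w y)"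
    let ?A3 = "\<lambda>y. ennreal (w x) * (ennreal (min ((dist x y)\<^sup>2) 1 * dist x y powr (e0 + 2*\<beta>)) * ennreal (w y))"
    have "(\<integral>\<^sup>+y. T x y \<partial>lborel) = (\<integral>\<^sup>+y. (?A0 y + ?A1 y + ?A2 y) + ?A3 y \<partial>lborel)"
      by (simp add: T_def)
    also have "\<dots> = (\<integral>\<^sup>+y. ?A0 y + ?A1 y + ?A2 y \<partial>lborel) + (\<integral>\<^sup>+y. ?A3 y \<partial>lborel)"
      by (rule nn_integral_add) measurable
    also have "(\<integral>\<^sup>+y. ?A0 y + ?A1 y + ?A2 y \<partial>lborel) = (\<integral>\<^sup>+y. ?A0 y + ?A1 y \<partial>lborel) + (\<integral>\<^sup>+y. ?A2 y \<partial>lborel)"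
      by (rule nn_integral_add) measurable
    also have "(\<integral>\<^sup>+y. ?A0 y + ?A1 y \<partial>lborel) = (\<integral>\<^sup>+y. ?A0 y \<partial>lborel) + (\<integral>\<^sup>+y. ?A1 y \<partial>lborel)"
      by (rule nn_integral_add) measurable
    also have "(\<integral>\<^sup>+y. ?A1 y \<partial>lborel) = ennreal (w x) * (\<integral>\<^sup>+y. ennreal (min ((dist x y)\<^sup>2) 1 * dist x y powr (e0+\<beta>)) \<partial>lborel)"
      by (rule nn_integral_cmult) measurable
    also have "(\<integral>\<^sup>+y. ?A3 y \<partial>lborel) = ennreal (w x) * (\<integral>\<^sup>+y. ennreal (min ((dist x y)\<^sup>2) 1 * dist x y powr (e0+2*\<beta>)) * ennreal (w y) \<partial>lborel)"
      by (rule nn_integral_cmult) measurable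
    finally have eq: "(\<integral>\<^sup>+y. T x y \<partial>lborel) = (\<integral>\<^sup>+y. ?A0 y \<partial>lborel)
        + ennreal (w x) * (\<integral>\<^sup>+y. ennreal (min ((dist x y)\<^sup>2) 1 * dist x y powr (e0+\<beta>)) \<partial>lborel)
        + (\<integral>\<^sup>+y. ?A2 y \<partial>lborel)
        + ennreal (w x) * (\<integral>\<^sup>+y. ennreal (min ((dist x y)\<^sup>2) 1 * dist x y powr (e0+2*\<beta>)) * ennreal (w y) \<partial>lborel)" .
    have "(\<integral>\<^sup>+y. T x y \<partial>lborel) \<le> ennreal B0 + ennreal (w x) * ennreal B1 + ennreal B2 + ennreal (w x) * ennreal B3"
      unfolding eq by (intro add_mono mult_left_mono B0 B1 B2 B3) simp_all
    also have "\<dots> = c1 + ennreal (w x) * c2"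
      by (simp add: c1_def c2_def distrib_left ac_simps)
    finally show ?thesis .
  qed
  define Q where "Q = (\<integral>\<^sup>+x. \<integral>\<^sup>+y. indicator S x * T x y \<partial>lborel \<partial>lborel)"
  have Qfin: "Q < \<infinity>"
  proof -
    have "Q = (\<integral>\<^sup>+x. indicator S x * (\<integral>\<^sup>+y. T x y \<partial>lborel) \<partial>lborel)"
      unfolding Q_def by (intro nn_integral_cong nn_integral_cmult Tmx)
    also have "\<dots> \<le> (\<integral>\<^sup>+x. indicator (ball 0 \<rho>) x * (c1 + ennreal (w x) * c2) \<partial>lborel)"
    proof (rule nn_integral_mono)
      fix x
      have "indicator S x \<le> (indicator (ball 0 \<rho>) x :: ennreal)" using \<rho> by (auto simp: indicator_def)
      then show "indicator S x * (\<integral>\<^sup>+y. T x y \<partial>lborel) \<le> indicator (ball 0 \<rho>) x * (c1 + ennreal (w x) * c2)"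
        by (intro mult_mono inner) simp_all
    qed
    also have "\<dots> = (\<integral>\<^sup>+x. c1 * indicator (ball 0 \<rho>) x + c2 * (indicator (ball 0 \<rho>) x * ennreal (w x)) \<partial>lborel)"
      by (intro nn_integral_cong) (simp add: distrib_left ac_simps)
    also have "\<dots> = (\<integral>\<^sup>+x. c1 * indicator (ball (0::'a) \<rho>) x \<partial>lborel) + (\<integral>\<^sup>+x. c2 * (indicator (ball 0 \<rho>) x * ennreal (w x)) \<partial>lborel)"
      by (rule nn_integral_add) measurable
    also have "\<dots> = c1 * emeasure lborel (ball (0::'a) \<rho>) + c2 * (\<integral>\<^sup>+x. indicator (ball 0 \<rho>) x * ennreal (w x) \<partial>lborel)"
      by (simp add: nn_integral_cmult)
    also have "\<dots> < \<infinity>"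
    proof -
      have f1: "emeasure lborel (ball (0::'a) \<rho>) < \<infinity>" by (rule emeasure_lborel_ball_finite)
      have f2: "(\<integral>\<^sup>+x. indicator (ball 0 \<rho>) x * ennreal (w x) \<partial>lborel) < \<infinity>"
        using gball[OF \<rho>(1), of 0] by (simp add: le_less_trans)
      have f3: "c1 < \<infinity>" "c2 < \<infinity>" by (simp_all add: c1_def c2_def)
      show ?thesis using f1 f2 f3 by (simp add: ennreal_mult_less_top)
    qed
    finally show ?thesis .
  qed
  have Q1: "(\<integral>\<^sup>+p. indicator S (fst p) * T (fst p) (snd p) \<partial>(lborel \<Otimes>\<^sub>M lborel)) = Q"
    unfolding Q_def using lborel.nn_integral_fst[OF Tm1] by simp
  have Q2: "(\<integral>\<^sup>+p. indicator S (snd p) * T (fst p) (snd p) \<partial>(lborel \<Otimes>\<^sub>M lborel)) = Q"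
  proof -
    have "(\<integral>\<^sup>+p. indicator S (snd p) * T (fst p) (snd p) \<partial>(lborel \<Otimes>\<^sub>M lborel))
        = (\<integral>\<^sup>+y. \<integral>\<^sup>+x. indicator S y * T x y \<partial>lborel \<partial>lborel)"
      using lborel_pair.nn_integral_snd[OF Tm2] by simp
    also have "\<dots> = (\<integral>\<^sup>+y. \<integral>\<^sup>+x. indicator S y * T y x \<partial>lborel \<partial>lborel)"
      using Tsym by simp
    finally show ?thesis unfolding Q_def .
  qed
  have "(\<integral>\<^sup>+p. indicator (D \<times> D) p * ennreal ((u (fst p) - u (snd p))^2 * J (fst p) (snd p)) \<partial>(lborel \<Otimes>\<^sub>M lborel))
      \<le> (\<integral>\<^sup>+p. ennreal Cst * (indicator S (fst p) * T (fst p) (snd p)) + ennreal Cst * (indicator S (snd p) * T (fst p) (snd p)) \<partial>(lborel \<Otimes>\<^sub>M lborel))"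
  proof (rule nn_integral_mono)
    fix p :: "'a \<times> 'a"
    show "indicator (D \<times> D) p * ennreal ((u (fst p) - u (snd p))^2 * J (fst p) (snd p))
      \<le> ennreal Cst * (indicator S (fst p) * T (fst p) (snd p)) + ennreal Cst * (indicator S (snd p) * T (fst p) (snd p))"
      using pw[of "fst p" "snd p"] by (simp add: distrib_left distrib_right)
  qed
  also have "\<dots> = ennreal Cst * (\<integral>\<^sup>+p. indicator S (fst p) * T (fst p) (snd p) \<partial>(lborel \<Otimes>\<^sub>M lborel))
      + ennreal Cst * (\<integral>\<^sup>+p. indicator S (snd p) * T (fst p) (snd p) \<partial>(lborel \<Otimes>\<^sub>M lborel))"
    using Tm1 Tm2 by (simp add: nn_integral_add nn_integral_cmult)
  also have "\<dots> = ennreal Cst * Q + ennreal Cst * Q" unfolding Q1 Q2 ..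
  also have "\<dots> < \<infinity>" using Qfin by (simp add: ennreal_mult_less_top)
  finally have I: "(\<integral>\<^sup>+p. indicator (D \<times> D) p * ennreal ((u (fst p) - u (snd p))^2 * J (fst p) (snd p)) \<partial>(lborel \<Otimes>\<^sub>M lborel)) < \<infinity>" .
  show ?thesis unfolding energy_def infinity_ennreal_def using I ennreal_less_top[of "1/2"] unfolding infinity_ennreal_def by (simp only: ennreal_mult_less_top) blast
qed


end
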